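(* Let $A$ be an eNTA. The language $\mathfrak L(A)$ is suffix-periodic: there exist $t_{per}>0$ and an integer $L>0$ with the following property. Suppose $$\lambda=(t_1,a_1),\dots,(t_{r-1},a_{r-1}),(t_r,a_r),(t_{r+1},a_{r+1}),\dots,(t_{r+m},a_{r+m})$$ is an observable timed trace in $\mathfrak L(A)$ with $t_r>t_{per}$, and let $K\in L\mathbb Z$ satisfy $t_r+K>t_{per}$. Then there exists an observable timed trace $\lambda'\in\mathfrak L(A)$ of the form $$\lambda'=(t_1',a_1'),\dots,(t_s',a_s'),(t_r+K,a_r),(t_{r+1}+K,a_{r+1}),\dots,(t_{r+m}+K,a_{r+m})$$ for some $s\ge0$, times $t_j'$ and actions $a_j'\in\Sigma$.
   Context: **Automata.** An eNTA (non-deterministic timed automaton with silent transitions) is a tuple $A=(\mathcal Q,q_0,\Sigma_\epsilon,\mathcal C,\mathcal T)$ with the following components. - $\mathcal Q$ is a finite set of locations and $q_0$ is the initial location. - $\Sigma$ is a finite set of observable actions, and $\Sigma_\epsilon=\Sigma\cup\{\epsilon\}$, where $\epsilon$ is silent. - $\mathcal C$ is a finite set of clocks. - $\mathcal T$ is a finite set of transitions $(q,a,g,\mathcal C_{rst},q')$ with $a\in\Sigma_\epsilon$, $\mathcal C_{rst}\subseteq\mathcal C$ the clocks reset, and guard $g$ a finite conjunction of constraints $c\sim n$, where $\sim\in\{<,\le,=,\ge,>\}$ and $n\in\mathbb N_0$. **Runs.** A run is a finite sequence $$(q_0,\mathbf 0)\xrightarrow{d_1}(q_0,d_1)\xrightarrow{\tau_1}(q_1,v_1)\xrightarrow{d_2}\cdots\xrightarrow{\tau_k}(q_k,v_k),$$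 where $d_i\ge0$, $\tau_i=(q_{i-1},a_i,g_i,\mathcal C_i,q_i)\in\mathcal T$, $v_0=\mathbf 0$, $v_{i-1}+d_i\models g_i$, and $v_i$ equals $v_{i-1}+d_i$ with the clocks of $\mathcal C_i$ set to $0$. **Traces and language.** The timed trace of a run is $(t_1,a_1),\dots,(t_k,a_k)$ with $t_i=d_1+\dots+d_i$. The observable timed trace is obtained by deleting all pairs with $a_i=\epsilon$. The language $\mathfrak L(A)$ is the set of observable timed traces of all runs of $A$ (all locations are accepting). *)

theory Defs
  imports Main "HOL-Library.Library"
begin

datatype cmp = CLt | CLe | CEq | CGe | CGt

type_synonym 'c constr = "'c \<times> cmp \<times> nat"
type_synonym 'c guard = "'c constr list"

text \<open>A transition (q, a, g, C_rst, q'); the action None stands for the silent action epsilon.\<close>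
type_synonym ('q,'a,'c) transition = "'q \<times> 'a option \<times> 'c guard \<times> 'c set \<times> 'q"

record ('q,'a,'c) enta =
  locs :: "'q set"
  init :: 'q
  sigma :: "'a set"
  clocks :: "'c set"
  trans :: "('q,'a,'c) transition set"

definition wf_enta :: "('q,'a,'c) enta \<Rightarrow> bool" where
  "wf_enta A \<longleftrightarrow> finite (locs A) \<and> init A \<in> locs A \<and> finite (sigma A) \<and>
     finite (clocks A) \<and> finite (trans A) \<and>
     (\<forall>(q,a,g,R,q') \<in> trans A. q \<in> locs A \<and> q' \<in> locs A \<and>
        (\<forall>b. a = Some b \<longrightarrow> b \<in> sigma A) \<and>
        (\<forall>(c,_,_) \<in> set g. c \<in> clocks A) \<and> R \<subseteq> clocks A)"

fun cmp_sat :: "cmp \<Rightarrow> real \<Rightarrow> real \<Rightarrow> bool" where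
  "cmp_sat CLt x n = (x < n)"
| "cmp_sat CLe x n = (x \<le> n)"
| "cmp_sat CEq x n = (x = n)"
| "cmp_sat CGe x n = (x \<ge> n)"
| "cmp_sat CGt x n = (x > n)"

definition guard_sat :: "('c \<Rightarrow> real) \<Rightarrow> 'c guard \<Rightarrow> bool" where
  "guard_sat v g \<longleftrightarrow> (\<forall>(c,r,n) \<in> set g. cmp_sat r (v c) (real n))"

definition reset :: "('c \<Rightarrow> real) \<Rightarrow> 'c set \<Rightarrow> ('c \<Rightarrow> real)" where
  "reset v R = (\<lambda>c. if c \<in> R then 0 else v c)"

text \<open>A run is a list of pairs (d_i, tau_i) of delays and transitions, starting in (q, v).\<close>
fun run_from :: "('q,'a,'c) enta \<Rightarrow> 'q \<Rightarrow> ('c \<Rightarrow> real) \<Rightarrow> (real \<times> ('q,'a,'c) transition) list \<Rightarrow> bool" where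
  "run_from A q v [] = True"
| "run_from A q v ((d, (p, a, g, R, p')) # rest) =
     (d \<ge> 0 \<and> (p, a, g, R, p') \<in> trans A \<and> p = q \<and>
      guard_sat (\<lambda>c. v c + d) g \<and>
      run_from A p' (reset (\<lambda>c. v c + d) R) rest)"

definition is_run :: "('q,'a,'c) enta \<Rightarrow> (real \<times> ('q,'a,'c) transition) list \<Rightarrow> bool" where
  "is_run A \<rho> \<longleftrightarrow> run_from A (init A) (\<lambda>_. 0) \<rho>"

fun timed_trace :: "real \<Rightarrow> (real \<times> ('q,'a,'c) transition) list \<Rightarrow> (real \<times> 'a option) list" where
  "timed_trace t [] = []"
| "timed_trace t ((d, (p, a, g, R, p')) # rest) = (t + d, a) # timed_trace (t + d) rest"

definition observable :: "(real \<times> 'a option) list \<Rightarrow> (real \<times> 'a) list" where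
  "observable tr = map (\<lambda>(t, a). (t, the a)) (filter (\<lambda>(t, a). a \<noteq> None) tr)"

definition lang :: "('q,'a,'c) enta \<Rightarrow> (real \<times> 'a) list set" where
  "lang A = {observable (timed_trace 0 \<rho>) | \<rho>. is_run A \<rho>}"

end

theory Submission
  imports Defs
begin


fun endst :: "'q \<Rightarrow> ('c \<Rightarrow> real) \<Rightarrow> (real \<times> ('q,'a,'c) transition) list \<Rightarrow> 'q \<times> ('c \<Rightarrow> real)" where
  "endst q v [] = (q, v)"
| "endst q v ((d, (p, a, g, R, p')) # rest) = endst p' (reset (\<lambda>c. v c + d) R) rest"

definition dur :: "(real \<times> ('q,'a,'c) transition) list \<Rightarrow> real" where
  "dur \<rho> = sum_list (map fst \<rho>)"

lemma dur_simps[simp]: "dur [] = 0" "dur (x # xs) = fst x + dur xs" "dur (xs @ ys) = dur xs + dur ys"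
  by (auto simp: dur_def)

lemma run_append:
  "run_from A q v (\<rho>1 @ \<rho>2) \<longleftrightarrow> run_from A q v \<rho>1 \<and> run_from A (fst (endst q v \<rho>1)) (snd (endst q v \<rho>1)) \<rho>2"
  by (induction A q v \<rho>1 rule: run_from.induct) auto

lemma endst_append:
  "endst q v (\<rho>1 @ \<rho>2) = endst (fst (endst q v \<rho>1)) (snd (endst q v \<rho>1)) \<rho>2"
  by (induction q v \<rho>1 rule: endst.induct) auto

lemma tt_append:
  "timed_trace T (\<rho>1 @ \<rho>2) = timed_trace T \<rho>1 @ timed_trace (T + dur \<rho>1) \<rho>2"
  by (induction T \<rho>1 rule: timed_trace.induct) (auto simp: add.assoc)

lemma tt_shift:
  "timed_trace (T + K) \<rho> = map (\<lambda>(t,a). (t + K, a)) (timed_trace T \<rho>)"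
proof (induction T \<rho> rule: timed_trace.induct)
  case (2 t d p a g R p' rest)
  then show ?case by (simp add: algebra_simps)
qed simp

lemma obs_append: "observable (xs @ ys) = observable xs @ observable ys"
  by (simp add: observable_def)

lemma obs_shift: "observable (map (\<lambda>(t,a). (t + K, a)) xs) = map (\<lambda>(t,a). (t + K, a)) (observable xs)"
  by (induction xs) (auto simp: observable_def)

lemma obs_times: "x \<in> set (observable xs) \<Longrightarrow> \<exists>b. (fst x, b) \<in> set xs"
  by (auto simp: observable_def)


definition cfg_after :: "'q \<Rightarrow> ('c \<Rightarrow> real) \<Rightarrow> (real \<times> ('q,'a,'c) transition) list \<Rightarrow> real \<Rightarrow> 'q \<times> ('c \<Rightarrow> real)" where
  "cfg_after q v \<rho> e = (fst (endst q v \<rho>), \<lambda>c. snd (endst q v \<rho>) c + e)"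

lemma split_run:
  assumes "run_from A q v \<rho>" "e \<ge> 0" "T \<le> s" "s \<le> T + dur \<rho> + e"
  shows "\<exists>\<rho>1 e1 \<rho>2 e2. run_from A q v \<rho>1 \<and> e1 \<ge> 0 \<and> T + dur \<rho>1 + e1 = s \<and> (\<forall>x\<in>set (timed_trace T \<rho>1). fst x \<le> s)
     \<and> run_from A (fst (endst q v \<rho>1)) (\<lambda>c. snd (endst q v \<rho>1) c + e1) \<rho>2 \<and> e2 \<ge> 0
     \<and> timed_trace T \<rho> = timed_trace T \<rho>1 @ timed_trace s \<rho>2
     \<and> cfg_after (fst (endst q v \<rho>1)) (\<lambda>c. snd (endst q v \<rho>1) c + e1) \<rho>2 e2 = cfg_after q v \<rho> e
     \<and> s + dur \<rho>2 + e2 = T + dur \<rho> + e"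
  using assms
proof (induction A q v \<rho> arbitrary: T rule: run_from.induct)
  case (1 A q v)
  show ?case
    apply (rule exI[of _ "[]"], rule exI[of _ "s - T"], rule exI[of _ "[]"], rule exI[of _ "T + e - s"])
    using 1 by (auto simp: cfg_after_def)
next
  case (2 A q v d p a g R p' rest)
  show ?case
  proof (cases "T + d \<le> s")
    case True
    have "s \<le> (T + d) + dur rest + e" using 2 by simp
    from "2.IH"[OF _ \<open>e \<ge> 0\<close> True this] "2.prems"(1)
    obtain \<rho>1 e1 \<rho>2 e2 where H: "run_from A p' (reset (\<lambda>c. v c + d) R) \<rho>1 \<and> e1 \<ge> 0 \<and> T + d + dur \<rho>1 + e1 = s \<and> (\<forall>x\<in>set (timed_trace (T+d) \<rho>1). fst x \<le> s)
     \<and> run_from A (fst (endst p' (reset (\<lambda>c. v c + d) R) \<rho>1)) (\<lambda>c. snd (endst p' (reset (\<lambda>c. v c + d) R) \<rho>1) c + e1) \<rho>2 \<and> e2 \<ge> 0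
     \<and> timed_trace (T+d) rest = timed_trace (T+d) \<rho>1 @ timed_trace s \<rho>2
     \<and> cfg_after (fst (endst p' (reset (\<lambda>c. v c + d) R) \<rho>1)) (\<lambda>c. snd (endst p' (reset (\<lambda>c. v c + d) R) \<rho>1) c + e1) \<rho>2 e2 = cfg_after p' (reset (\<lambda>c. v c + d) R) rest e
     \<and> s + dur \<rho>2 + e2 = T + d + dur rest + e"
      by auto
    show ?thesis
      apply (rule exI[of _ "(d, (p, a, g, R, p')) # \<rho>1"], rule exI[of _ e1], rule exI[of _ \<rho>2], rule exI[of _ e2])
      using H "2.prems" True by (auto simp: cfg_after_def add.assoc)
  next
    case False
    have eq: "(\<lambda>c. v c + (s - T) + (T + d - s)) = (\<lambda>c. v c + d)" by (auto simp: algebra_simps)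
    show ?thesis
      apply (rule exI[of _ "[]"], rule exI[of _ "s - T"], rule exI[of _ "(T + d - s, (p, a, g, R, p')) # rest"], rule exI[of _ e])
      using "2.prems" False by (auto simp: cfg_after_def eq)
  qed
qed

lemma join_run:
  assumes "run_from A q v \<rho>1" "e1 \<ge> 0" "run_from A (fst (endst q v \<rho>1)) (\<lambda>c. snd (endst q v \<rho>1) c + e1) \<rho>2" "e2 \<ge> 0"
  shows "\<exists>\<rho> e. run_from A q v \<rho> \<and> e \<ge> 0 \<and> cfg_after q v \<rho> e = cfg_after (fst (endst q v \<rho>1)) (\<lambda>c. snd (endst q v \<rho>1) c + e1) \<rho>2 e2
     \<and> timed_trace T \<rho> = timed_trace T \<rho>1 @ timed_trace (T + dur \<rho>1 + e1) \<rho>2 \<and> dur \<rho> + e = dur \<rho>1 + e1 + dur \<rho>2 + e2"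
proof (cases \<rho>2)
  case Nil
  show ?thesis
    apply (rule exI[of _ \<rho>1], rule exI[of _ "e1 + e2"])
    using assms Nil by (auto simp: cfg_after_def add.assoc)
next
  case (Cons x rest)
  obtain d p a g R p' where x: "x = (d, (p, a, g, R, p'))" by (cases x) auto
  have eq: "(\<lambda>c. snd (endst q v \<rho>1) c + (e1 + d)) = (\<lambda>c. snd (endst q v \<rho>1) c + e1 + d)" by (auto simp: algebra_simps)
  show ?thesis
    apply (rule exI[of _ "\<rho>1 @ (e1 + d, (p, a, g, R, p')) # rest"], rule exI[of _ e2])
    using assms Cons x by (auto simp: cfg_after_def run_append endst_append tt_append eq algebra_simps)
qed


definition consts_of :: "('q,'a,'c) enta \<Rightarrow> nat set" where
  "consts_of A = (\<Union>(q,a,g,R,q') \<in> trans A. (\<lambda>(c,r,n). n) ` set g)"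

definition maxc :: "('q,'a,'c) enta \<Rightarrow> nat" where
  "maxc A = Max (insert 0 (consts_of A))"

lemma guard_bound:
  assumes "wf_enta A" "(q,a,g,R,q') \<in> trans A" "(c,r,n) \<in> set g"
  shows "n \<le> maxc A \<and> c \<in> clocks A"
proof -
  have fin: "finite (consts_of A)" using assms(1) unfolding wf_enta_def consts_of_def by auto
  have "n \<in> consts_of A" using assms(2,3) unfolding consts_of_def by force
  then have "n \<le> maxc A" unfolding maxc_def using fin by simp
  moreover have "c \<in> clocks A" using assms unfolding wf_enta_def by fastforce
  ultimately show ?thesis by simp
qed

lemma reset_bound:
  assumes "wf_enta A" "(q,a,g,R,q') \<in> trans A"
  shows "R \<subseteq> clocks A" "q' \<in> locs A"
  using assms unfolding wf_enta_def by fastforce+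

definition veq :: "('q,'a,'c) enta \<Rightarrow> ('c \<Rightarrow> real) \<Rightarrow> ('c \<Rightarrow> real) \<Rightarrow> bool" where
  "veq A v v' \<longleftrightarrow> (\<forall>c\<in>clocks A. v c = v' c \<or> (v c > maxc A \<and> v' c > maxc A))"

lemma veq_add: "veq A v v' \<Longrightarrow> e \<ge> 0 \<Longrightarrow> veq A (\<lambda>c. v c + e) (\<lambda>c. v' c + e)"
  unfolding veq_def by force

lemma veq_reset: "veq A v v' \<Longrightarrow> veq A (reset v R) (reset v' R)"
  unfolding veq_def reset_def by auto

lemma cmp_big: "x > real M \<Longrightarrow> y > real M \<Longrightarrow> n \<le> M \<Longrightarrow> cmp_sat r x (real n) = cmp_sat r y (real n)"
  by (cases r) auto

lemma sim_run:
  assumes "wf_enta A" "run_from A q v \<rho>" "veq A v v'"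
  shows "run_from A q v' \<rho> \<and> fst (endst q v' \<rho>) = fst (endst q v \<rho>) \<and> veq A (snd (endst q v \<rho>)) (snd (endst q v' \<rho>))"
  using assms(2,3,1)
proof (induction A q v \<rho> arbitrary: v' rule: run_from.induct)
  case (1 A q v)
  then show ?case by simp
next
  case (2 A' q v d p a g R p' rest)
  then have tr: "(p, a, g, R, p') \<in> trans A'" and ok: "d \<ge> 0" and wf: "wf_enta A'" by auto
  have ve: "veq A' (\<lambda>c. v c + d) (\<lambda>c. v' c + d)" using veq_add[OF "2.prems"(2) ok] .
  have gs: "\<forall>(c,r,n)\<in>set g. cmp_sat r (v c + d) (real n)" using "2.prems"(1) by (auto simp: guard_sat_def)
  have "guard_sat (\<lambda>c. v' c + d) g"
    unfolding guard_sat_def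
  proof (clarify)
    fix c r n assume cin: "(c, r, n) \<in> set g"
    have g1: "cmp_sat r (v c + d) (real n)" using gs cin by fastforce
    have b: "n \<le> maxc A' \<and> c \<in> clocks A'" using guard_bound[OF wf tr cin] .
    then have "v c + d = v' c + d \<or> (v c + d > maxc A' \<and> v' c + d > maxc A')" using ve unfolding veq_def by auto
    then show "cmp_sat r (v' c + d) (real n)"
    proof
      assume "v c + d = v' c + d" then show ?thesis using g1 by simp
    next
      assume "v c + d > maxc A' \<and> v' c + d > maxc A'"
      then show ?thesis using cmp_big[of "maxc A'" "v c + d" "v' c + d" n r] b g1 by auto
    qed
  qed
  moreover have "veq A' (reset (\<lambda>c. v c + d) R) (reset (\<lambda>c. v' c + d) R)" using veq_reset[OF ve] .
  moreover have "run_from A' p' (reset (\<lambda>c. v c + d) R) rest" using "2.prems" by auto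
  ultimately show ?case using "2.prems" "2.IH" wf by auto
qed


lemma f_nat: assumes "\<forall>x. f (x + 1) = f x + (1::real)" shows "f (x + real n) = f x + real n"
proof (induction n)
  case (Suc n)
  have "f (x + real (Suc n)) = f ((x + real n) + 1)" by (simp add: algebra_simps)
  also have "\<dots> = f (x + real n) + 1" using assms by blast
  finally show ?case using Suc by simp
qed simp

lemma f_int: assumes "\<forall>x. f (x + 1) = f x + (1::real)" shows "f (x + real_of_int k) = f x + real_of_int k"
proof (cases "k \<ge> 0")
  case True
  then show ?thesis using f_nat[OF assms, of x "nat k"] by simp
next
  case False
  have "f (x + real_of_int k + real (nat (-k))) = f (x + real_of_int k) + real (nat (-k))"
    using f_nat[OF assms] by blast
  moreover have "x + real_of_int k + real (nat (-k)) = x" using False by simp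
  ultimately show ?thesis using False by simp
qed

lemma cmp_pres:
  assumes sm: "strict_mono (f::real \<Rightarrow> real)" and sh: "\<forall>x. f (x + 1) = f x + 1"
  shows "cmp_sat r (a - b) (real n) \<longleftrightarrow> cmp_sat r (f a - f b) (real n)"
proof -
  have fb: "f (b + real n) = f b + real n" using f_nat[OF sh] .
  have lt: "a < b + real n \<longleftrightarrow> f a < f (b + real n)" using sm by (simp add: strict_mono_less)
  have le: "a \<le> b + real n \<longleftrightarrow> f a \<le> f (b + real n)" using sm by (simp add: strict_mono_less_eq)
  have eq: "a = b + real n \<longleftrightarrow> f a = f (b + real n)" using sm by (simp add: strict_mono_eq)
  have lt2: "b + real n < a \<longleftrightarrow> f (b + real n) < f a" using sm by (simp add: strict_mono_less)
  have le2: "b + real n \<le> a \<longleftrightarrow> f (b + real n) \<le> f a" using sm by (simp add: strict_mono_less_eq)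
  show ?thesis using lt le eq lt2 le2 fb by (cases r) auto
qed

fun xform :: "(real \<Rightarrow> real) \<Rightarrow> real \<Rightarrow> (real \<times> ('q,'a,'c) transition) list \<Rightarrow> (real \<times> ('q,'a,'c) transition) list" where
  "xform f T [] = []"
| "xform f T ((d, \<tau>) # rest) = (f (T + d) - f T, \<tau>) # xform f (T + d) rest"

lemma xform_run:
  assumes sm: "strict_mono (f::real \<Rightarrow> real)" and sh: "\<forall>x. f (x + 1) = f x + 1"
  shows "run_from A q (\<lambda>c. T - Rt c) \<rho> \<Longrightarrow> run_from A q (\<lambda>c. f T - f (Rt c)) (xform f T \<rho>) \<and>
     dur (xform f T \<rho>) = f (T + dur \<rho>) - f T \<and>
     (\<exists>Re. endst q (\<lambda>c. T - Rt c) \<rho> = (fst (endst q (\<lambda>c. T - Rt c) \<rho>), \<lambda>c. (T + dur \<rho>) - Re c) \<and>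
           endst q (\<lambda>c. f T - f (Rt c)) (xform f T \<rho>) = (fst (endst q (\<lambda>c. T - Rt c) \<rho>), \<lambda>c. f (T + dur \<rho>) - f (Re c)))"
proof (induction \<rho> arbitrary: q T Rt)
  case Nil
  then show ?case by (auto intro!: exI[of _ Rt])
next
  case (Cons x rest)
  obtain d p a g R p' where x: "x = (d, (p, a, g, R, p'))" by (cases x) auto
  define Rt' where "Rt' = (\<lambda>c. if c \<in> R then T + d else Rt c)"
  have r1: "reset (\<lambda>c. T - Rt c + d) R = (\<lambda>c. (T + d) - Rt' c)"
    by (auto simp: reset_def Rt'_def)
  have r2: "reset (\<lambda>c. f T - f (Rt c) + (f (T + d) - f T)) R = (\<lambda>c. f (T + d) - f (Rt' c))"
    by (auto simp: reset_def Rt'_def)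
  have pre: "d \<ge> 0" "(p, a, g, R, p') \<in> trans A" "p = q" "guard_sat (\<lambda>c. T - Rt c + d) g"
    "run_from A p' (\<lambda>c. (T + d) - Rt' c) rest"
    using Cons.prems x r1 by auto
  have d': "f (T + d) - f T \<ge> 0" using pre(1) sm by (simp add: strict_mono_less_eq)
  have g': "guard_sat (\<lambda>c. f T - f (Rt c) + (f (T + d) - f T)) g"
    using pre(4) cmp_pres[OF sm sh, of _ "T + d"] unfolding guard_sat_def by (auto simp: algebra_simps)
  from Cons.IH[OF pre(5)] obtain Re where
    H: "run_from A p' (\<lambda>c. f (T + d) - f (Rt' c)) (xform f (T + d) rest)"
      "dur (xform f (T + d) rest) = f (T + d + dur rest) - f (T + d)"
      "endst p' (\<lambda>c. T + d - Rt' c) rest = (fst (endst p' (\<lambda>c. T + d - Rt' c) rest), \<lambda>c. T + d + dur rest - Re c)"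
      "endst p' (\<lambda>c. f (T + d) - f (Rt' c)) (xform f (T + d) rest) = (fst (endst p' (\<lambda>c. T + d - Rt' c) rest), \<lambda>c. f (T + d + dur rest) - f (Re c))"
    by blast
  show ?case
    using H pre d' g' r1 r2 x by (auto simp: add.assoc intro!: exI[of _ Re])
qed


definition reach_cfg :: "('q,'a,'c) enta \<Rightarrow> real \<Rightarrow> 'q \<Rightarrow> ('c \<Rightarrow> real) \<Rightarrow> bool" where
  "reach_cfg A t q w \<longleftrightarrow> (\<exists>\<rho> e. is_run A \<rho> \<and> e \<ge> 0 \<and> dur \<rho> + e = t \<and> cfg_after (init A) (\<lambda>_. 0) \<rho> e = (q, w))"

lemma reach_xform:
  assumes sm: "strict_mono (f::real \<Rightarrow> real)" and sh: "\<forall>x. f (x + 1) = f x + 1" and f0: "f 0 = 0"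
    and r: "reach_cfg A t q w"
  shows "reach_cfg A (f t) q (\<lambda>c. f t - f (t - w c))"
proof -
  obtain \<rho> e where R: "is_run A \<rho>" "e \<ge> 0" "dur \<rho> + e = t" "cfg_after (init A) (\<lambda>_. 0) \<rho> e = (q, w)"
    using r unfolding reach_cfg_def by blast
  have z: "(\<lambda>_. 0::real) = (\<lambda>c. 0 - (\<lambda>_. 0) c)" by simp
  have run0: "run_from A (init A) (\<lambda>c. 0 - (\<lambda>_. 0::real) c) \<rho>" using R(1) unfolding is_run_def by simp
  from xform_run[OF sm sh run0] obtain Re where
    X: "run_from A (init A) (\<lambda>c. f 0 - f 0) (xform f 0 \<rho>)"
       "dur (xform f 0 \<rho>) = f (dur \<rho>) - f 0"
       "endst (init A) (\<lambda>c. 0) \<rho> = (fst (endst (init A) (\<lambda>c. 0) \<rho>), \<lambda>c. dur \<rho> - Re c)"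
       "endst (init A) (\<lambda>c. f 0 - f 0) (xform f 0 \<rho>) = (fst (endst (init A) (\<lambda>c. 0) \<rho>), \<lambda>c. f (dur \<rho>) - f (Re c))"
    by auto
  have q: "q = fst (endst (init A) (\<lambda>c. 0) \<rho>)" using R(4) unfolding cfg_after_def by auto
  have w: "w = (\<lambda>c. dur \<rho> - Re c + e)" using R(4) X(3) unfolding cfg_after_def
    by (metis Pair_inject snd_conv)
  have Rew: "\<And>c. Re c = t - w c" using w R(3) by auto
  have e': "f t - f (dur \<rho>) \<ge> 0" using sm R(2,3) by (auto simp: strict_mono_less_eq)
  show ?thesis unfolding reach_cfg_def
    apply (rule exI[of _ "xform f 0 \<rho>"], rule exI[of _ "f t - f (dur \<rho>)"])
    using X f0 e' q Rew by (auto simp: is_run_def cfg_after_def)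
qed

lemma reach_g:
  assumes sm: "strict_mono (g::real \<Rightarrow> real)" and sh: "\<forall>x. g (x + 1) = g x + 1" and g0: "g 0 = 0"
    and r: "reach_cfg A (real_of_int m) q w"
  shows "reach_cfg A (real_of_int m) q (\<lambda>c. g (w c))"
proof -
  define f where "f = (\<lambda>x. - g (- x))"
  have smf: "strict_mono f" unfolding f_def strict_mono_def using sm by (simp add: strict_mono_less)
  have gi: "\<And>x k. g (x + real_of_int k) = g x + real_of_int k" using f_int[OF sh] by blast
  have shf: "\<forall>x. f (x + 1) = f x + 1"
  proof
    fix x
    have "g (- x - 1) = g (- x) - 1" using gi[of "-x" "-1"] by simp
    then show "f (x + 1) = f x + 1" unfolding f_def by simp
  qed
  have f0: "f 0 = 0" using g0 unfolding f_def by simp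
  have fm: "f (real_of_int m) = real_of_int m" using gi[of 0 "-m"] g0 unfolding f_def by simp
  have fc: "\<And>c. f (real_of_int m - w c) = real_of_int m - g (w c)"
    using gi[of "w c" "-m" for c] unfolding f_def by simp
  show ?thesis using reach_xform[OF smf shf f0 r] fm fc by simp
qed

lemma interp:
  fixes P :: "(real \<times> real) set"
  assumes fin: "finite P" and z: "(0,0) \<in> P" and rng: "\<forall>(a,b)\<in>P. 0 \<le> a \<and> a < 1 \<and> 0 \<le> b \<and> b < 1"
    and iso: "\<forall>(a,b)\<in>P. \<forall>(a',b')\<in>P. a \<le> a' \<longleftrightarrow> b \<le> b'"
  shows "\<exists>h. (\<forall>x y. 0 \<le> x \<longrightarrow> x < y \<longrightarrow> y < 1 \<longrightarrow> h x < h y) \<and> (\<forall>x. 0 \<le> x \<longrightarrow> x < 1 \<longrightarrow> 0 \<le> h x \<and> h x < 1) \<and> (\<forall>(a,b)\<in>P. h a = b)"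
proof -
  define P' where "P' = insert (1,1) P"
  define A where "A = fst ` P'"
  have finA: "finite A" using fin unfolding A_def P'_def by simp
  have rng': "\<And>a b. (a,b) \<in> P' \<Longrightarrow> 0 \<le> a \<and> a \<le> 1 \<and> 0 \<le> b \<and> b \<le> 1" using rng unfolding P'_def by force
  have iso': "\<And>a b a' b'. (a,b) \<in> P' \<Longrightarrow> (a',b') \<in> P' \<Longrightarrow> a \<le> a' \<longleftrightarrow> b \<le> b'"
  proof -
    fix a b a' b' assume h: "(a,b) \<in> P'" "(a',b') \<in> P'"
    show "a \<le> a' \<longleftrightarrow> b \<le> b'"
    proof (cases "(a,b) \<in> P \<and> (a',b') \<in> P")
      case True then show ?thesis using iso by fastforce
    next
      case False
      then show ?thesis using h rng unfolding P'_def by fastforce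
    qed
  qed
  define \<phi> where "\<phi> a = (THE b. (a,b) \<in> P')" for a
  have phi: "\<And>a b. (a,b) \<in> P' \<Longrightarrow> \<phi> a = b"
  proof -
    fix a b assume h: "(a,b) \<in> P'"
    show "\<phi> a = b" unfolding \<phi>_def
    proof (rule the_equality)
      show "(a,b) \<in> P'" by fact
      fix b' assume "(a,b') \<in> P'"
      then show "b' = b" using iso'[OF h] iso'[of a b' a b] h by force
    qed
  qed
  have phiA: "\<And>a. a \<in> A \<Longrightarrow> (a, \<phi> a) \<in> P'" unfolding A_def using phi by force
  have phirng: "\<And>a. a \<in> A \<Longrightarrow> 0 \<le> \<phi> a \<and> \<phi> a \<le> 1" using phiA rng' by blast
  have phimono: "\<And>a a'. a \<in> A \<Longrightarrow> a' \<in> A \<Longrightarrow> a < a' \<Longrightarrow> \<phi> a < \<phi> a'"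
    using phiA iso' by (meson not_le)
  have phimono': "\<And>a a'. a \<in> A \<Longrightarrow> a' \<in> A \<Longrightarrow> a \<le> a' \<Longrightarrow> \<phi> a \<le> \<phi> a'"
    using phiA iso' by meson
  have A0: "0 \<in> A" and A1: "1 \<in> A" using z unfolding A_def P'_def by force+
  define lo where "lo x = Max {a\<in>A. a \<le> x}" for x
  define hi where "hi x = Min {a\<in>A. x < a}" for x
  have LO: "lo x \<in> A \<and> lo x \<le> x \<and> (\<forall>a\<in>A. a \<le> x \<longrightarrow> a \<le> lo x)" if "0 \<le> x" for x
  proof -
    have f: "finite {a\<in>A. a \<le> x}" using finA by simp
    have ne: "0 \<in> {a\<in>A. a \<le> x}" using A0 that by simp
    show ?thesis unfolding lo_def using Max_in[OF f] Max_ge[OF f] ne by auto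
  qed
  have HI: "hi x \<in> A \<and> x < hi x \<and> (\<forall>a\<in>A. x < a \<longrightarrow> hi x \<le> a)" if "x < 1" for x
  proof -
    have f: "finite {a\<in>A. x < a}" using finA by simp
    have ne: "1 \<in> {a\<in>A. x < a}" using A1 that by simp
    show ?thesis unfolding hi_def using Min_in[OF f] Min_le[OF f] ne by auto
  qed
  define h where "h x = \<phi> (lo x) + (x - lo x) * (\<phi> (hi x) - \<phi> (lo x)) / (hi x - lo x)" for x
  have B: "\<phi> (lo x) \<le> h x \<and> h x < \<phi> (hi x)" if "0 \<le> x" "x < 1" for x
  proof -
    note L = LO[OF that(1)] and H = HI[OF that(2)]
    have d1: "0 \<le> x - lo x" "x - lo x < hi x - lo x" using L H by auto
    have d2: "\<phi> (hi x) - \<phi> (lo x) > 0" using phimono L H by auto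
    have r0: "0 \<le> (x - lo x) / (hi x - lo x)" using d1 by simp
    have r1: "(x - lo x) / (hi x - lo x) < 1" using d1 by simp
    have "(x - lo x) * (\<phi> (hi x) - \<phi> (lo x)) / (hi x - lo x) = ((x - lo x) / (hi x - lo x)) * (\<phi> (hi x) - \<phi> (lo x))"
      by simp
    moreover have "0 \<le> ((x - lo x) / (hi x - lo x)) * (\<phi> (hi x) - \<phi> (lo x))"
      using mult_nonneg_nonneg[OF r0, of "\<phi> (hi x) - \<phi> (lo x)"] d2 by linarith
    moreover have "((x - lo x) / (hi x - lo x)) * (\<phi> (hi x) - \<phi> (lo x)) < \<phi> (hi x) - \<phi> (lo x)"
      using mult_strict_right_mono[OF r1 d2] by (simp only: mult_1)
    ultimately show ?thesis unfolding h_def by linarith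
  qed
  have mono: "h x < h y" if "0 \<le> x" "x < y" "y < 1" for x y
  proof (cases "lo x = lo y")
    case True
    note Lx = LO[OF that(1)] and Hx = HI[of x] and Ly = LO[of y] and Hy = HI[OF that(3)]
    have x1: "x < 1" using that by simp
    have y0: "0 \<le> y" using that by simp
    have "hi x \<le> hi y" using Hx[OF x1] Hy that by auto
    moreover have "hi y \<le> hi x"
    proof -
      have "\<not> hi x \<le> y" using Ly[OF y0] Hx[OF x1] True Lx by force
      then show ?thesis using Hy Hx[OF x1] by auto
    qed
    ultimately have hh: "hi x = hi y" by simp
    have d: "hi x - lo x > 0" "\<phi> (hi x) - \<phi> (lo x) > 0" using Lx Hx[OF x1] phimono by auto
    have "(x - lo x) * (\<phi> (hi x) - \<phi> (lo x)) < (y - lo x) * (\<phi> (hi x) - \<phi> (lo x))"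
      using d that by simp
    then have "(x - lo x) * (\<phi> (hi x) - \<phi> (lo x)) / (hi x - lo x) < (y - lo x) * (\<phi> (hi x) - \<phi> (lo x)) / (hi x - lo x)"
      using d by (simp add: divide_strict_right_mono)
    then show ?thesis unfolding h_def using True hh by simp
  next
    case False
    have x1: "x < 1" and y0: "0 \<le> y" using that by auto
    note Lx = LO[OF that(1)] and Hx = HI[OF x1] and Ly = LO[OF y0] and Hy = HI[OF that(3)]
    have "lo x \<le> lo y" using Lx Ly that by auto
    then have "lo x < lo y" using False by simp
    then have "x < lo y" using Lx Ly by force
    then have "hi x \<le> lo y" using Hx Ly by auto
    then have "\<phi> (hi x) \<le> \<phi> (lo y)" using phimono' Hx Ly by auto
    then show ?thesis using B[OF that(1) x1] B[OF y0 that(3)] by linarith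
  qed
  have rngh: "0 \<le> h x \<and> h x < 1" if "0 \<le> x" "x < 1" for x
    using B[OF that] phirng LO[OF that(1)] HI[OF that(2)] by force
  have pts: "h a = b" if "(a,b) \<in> P" for a b
  proof -
    have ab: "(a,b) \<in> P'" using that unfolding P'_def by simp
    have a: "a \<in> A" "0 \<le> a" "a < 1" using that rng ab unfolding A_def by force+
    have "lo a = a" using LO[OF a(2)] a(1) by force
    then show ?thesis unfolding h_def using phi[OF ab] by simp
  qed
  show ?thesis using mono rngh pts by blast
qed

lemma mk_g:
  fixes P :: "(real \<times> real) set"
  assumes fin: "finite P" and z: "(0,0) \<in> P" and rng: "\<forall>(a,b)\<in>P. 0 \<le> a \<and> a < 1 \<and> 0 \<le> b \<and> b < 1"
    and iso: "\<forall>(a,b)\<in>P. \<forall>(a',b')\<in>P. a \<le> a' \<longleftrightarrow> b \<le> b'"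
  shows "\<exists>g. strict_mono g \<and> (\<forall>x. g (x + 1) = g x + 1) \<and> g 0 = 0 \<and> (\<forall>(a,b)\<in>P. g a = b)"
proof -
  obtain h where H: "\<forall>x y. 0 \<le> x \<longrightarrow> x < y \<longrightarrow> y < 1 \<longrightarrow> h x < h y" "\<forall>x. 0 \<le> x \<longrightarrow> x < 1 \<longrightarrow> 0 \<le> h x \<and> h x < 1"
     "\<forall>(a,b)\<in>P. h a = b"
    using interp[OF assms] by blast
  define g where "g x = real_of_int \<lfloor>x\<rfloor> + h (frac x)" for x
  have h00: "h 0 = 0" using H(3) z by auto
  have sm: "strict_mono g"
    unfolding strict_mono_def
  proof (intro allI impI)
    fix x y :: real assume xy: "x < y"
    have fx: "0 \<le> frac x" "frac x < 1" "0 \<le> frac y" "frac y < 1" by (auto simp: frac_lt_1)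
    have hx: "0 \<le> h (frac x) \<and> h (frac x) < 1" "0 \<le> h (frac y) \<and> h (frac y) < 1" using H(2) fx by auto
    have fl: "\<lfloor>x\<rfloor> \<le> \<lfloor>y\<rfloor>" using xy by (simp add: floor_mono)
    show "g x < g y"
    proof (cases "\<lfloor>x\<rfloor> = \<lfloor>y\<rfloor>")
      case True
      then have "frac x < frac y" using xy unfolding frac_def by simp
      then have "h (frac x) < h (frac y)" using H(1) fx by blast
      then show ?thesis unfolding g_def using True by simp
    next
      case False
      then have "\<lfloor>x\<rfloor> + 1 \<le> \<lfloor>y\<rfloor>" using fl by simp
      then have "real_of_int \<lfloor>x\<rfloor> + 1 \<le> real_of_int \<lfloor>y\<rfloor>" by linarith
      then show ?thesis unfolding g_def using hx by linarith
    qed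
  qed
  have sh: "\<forall>x. g (x + 1) = g x + 1" unfolding g_def by (simp add: frac_def)
  have g0: "g 0 = 0" unfolding g_def using h00 by simp
  have pts: "\<forall>(a,b)\<in>P. g a = b"
  proof (clarify)
    fix a b assume ab: "(a,b) \<in> P"
    then have "0 \<le> a" "a < 1" using rng by auto
    then have "\<lfloor>a\<rfloor> = 0" "frac a = a" by (auto simp: floor_eq_iff frac_eq)
    then show "g a = b" unfolding g_def using H(3) ab by auto
  qed
  show ?thesis using sm sh g0 pts by blast
qed

definition sig :: "('q,'a,'c) enta \<Rightarrow> 'q \<Rightarrow> ('c \<Rightarrow> real) \<Rightarrow> 'q \<times> ('c \<Rightarrow> int option) \<times> ('c \<times> 'c) set \<times> 'c set" where
  "sig A q w = (q, (\<lambda>c. if c \<in> clocks A \<and> w c \<le> maxc A then Some \<lfloor>w c\<rfloor> else None),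
     {(c,d). c \<in> clocks A \<and> d \<in> clocks A \<and> w c \<le> maxc A \<and> w d \<le> maxc A \<and> frac (w c) \<le> frac (w d)},
     {c. c \<in> clocks A \<and> w c \<le> maxc A \<and> frac (w c) = 0})"

lemma sig_match:
  assumes wf: "wf_enta A" and s: "sig A q w = sig A q w2"
  shows "\<exists>g. strict_mono g \<and> (\<forall>x. g (x + 1) = g x + 1) \<and> g 0 = 0 \<and>
     (\<forall>c\<in>clocks A. w2 c \<le> maxc A \<longrightarrow> g (w2 c) = w c) \<and> (\<forall>c\<in>clocks A. w2 c \<le> maxc A \<longleftrightarrow> w c \<le> maxc A)"
proof -
  let ?M = "real (maxc A)"
  have act: "\<And>c. c \<in> clocks A \<Longrightarrow> (w2 c \<le> ?M \<longleftrightarrow> w c \<le> ?M)"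
  proof -
    fix c assume c: "c \<in> clocks A"
    have "fst (snd (sig A q w)) c = fst (snd (sig A q w2)) c" using s by simp
    then have "(\<lambda>c. if c \<in> clocks A \<and> w c \<le> maxc A then Some \<lfloor>w c\<rfloor> else None) c = (\<lambda>c. if c \<in> clocks A \<and> w2 c \<le> maxc A then Some \<lfloor>w2 c\<rfloor> else None) c"
      unfolding sig_def by (simp only: fst_conv snd_conv)
    then show "w2 c \<le> ?M \<longleftrightarrow> w c \<le> ?M" using c by (auto split: if_splits)
  qed
  have fl: "\<And>c. c \<in> clocks A \<Longrightarrow> w c \<le> ?M \<Longrightarrow> \<lfloor>w2 c\<rfloor> = \<lfloor>w c\<rfloor>"
  proof -
    fix c assume c: "c \<in> clocks A" "w c \<le> ?M"
    have "fst (snd (sig A q w)) c = fst (snd (sig A q w2)) c" using s by simp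
    then have "(\<lambda>c. if c \<in> clocks A \<and> w c \<le> maxc A then Some \<lfloor>w c\<rfloor> else None) c = (\<lambda>c. if c \<in> clocks A \<and> w2 c \<le> maxc A then Some \<lfloor>w2 c\<rfloor> else None) c"
      unfolding sig_def by (simp only: fst_conv snd_conv)
    then show "\<lfloor>w2 c\<rfloor> = \<lfloor>w c\<rfloor>" using c act[OF c(1)] by (auto split: if_splits)
  qed
  have rel: "\<And>c d. c \<in> clocks A \<Longrightarrow> d \<in> clocks A \<Longrightarrow> w c \<le> ?M \<Longrightarrow> w d \<le> ?M \<Longrightarrow> (frac (w2 c) \<le> frac (w2 d) \<longleftrightarrow> frac (w c) \<le> frac (w d))"
  proof -
    fix c d assume cd: "c \<in> clocks A" "d \<in> clocks A" "w c \<le> ?M" "w d \<le> ?M"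
    have "{(c,d). c \<in> clocks A \<and> d \<in> clocks A \<and> w c \<le> maxc A \<and> w d \<le> maxc A \<and> frac (w c) \<le> frac (w d)}
        = {(c,d). c \<in> clocks A \<and> d \<in> clocks A \<and> w2 c \<le> maxc A \<and> w2 d \<le> maxc A \<and> frac (w2 c) \<le> frac (w2 d)}"
      using arg_cong[OF s, of "\<lambda>x. fst (snd (snd x))"] unfolding sig_def by (simp only: fst_conv snd_conv)
    then have "(c,d) \<in> {(c,d). c \<in> clocks A \<and> d \<in> clocks A \<and> w c \<le> maxc A \<and> w d \<le> maxc A \<and> frac (w c) \<le> frac (w d)}
        \<longleftrightarrow> (c,d) \<in> {(c,d). c \<in> clocks A \<and> d \<in> clocks A \<and> w2 c \<le> maxc A \<and> w2 d \<le> maxc A \<and> frac (w2 c) \<le> frac (w2 d)}"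
      by simp
    then show "frac (w2 c) \<le> frac (w2 d) \<longleftrightarrow> frac (w c) \<le> frac (w d)" using cd act[OF cd(1)] act[OF cd(2)] by simp
  qed
  have zr: "\<And>c. c \<in> clocks A \<Longrightarrow> w c \<le> ?M \<Longrightarrow> (frac (w2 c) = 0 \<longleftrightarrow> frac (w c) = 0)"
  proof -
    fix c assume cd: "c \<in> clocks A" "w c \<le> ?M"
    have "{c. c \<in> clocks A \<and> w c \<le> maxc A \<and> frac (w c) = 0} = {c. c \<in> clocks A \<and> w2 c \<le> maxc A \<and> frac (w2 c) = 0}"
      using arg_cong[OF s, of "\<lambda>x. snd (snd (snd x))"] unfolding sig_def by (simp only: fst_conv snd_conv)
    then have "c \<in> {c. c \<in> clocks A \<and> w c \<le> maxc A \<and> frac (w c) = 0} \<longleftrightarrow> c \<in> {c. c \<in> clocks A \<and> w2 c \<le> maxc A \<and> frac (w2 c) = 0}"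
      by simp
    then show "frac (w2 c) = 0 \<longleftrightarrow> frac (w c) = 0" using cd act[OF cd(1)] by simp
  qed
  define P where "P = insert (0,0) ((\<lambda>c. (frac (w2 c), frac (w c))) ` {c\<in>clocks A. w c \<le> ?M})"
  have finC: "finite (clocks A)" using wf unfolding wf_enta_def by simp
  have finP: "finite P" unfolding P_def using finC by simp
  have z: "(0,0) \<in> P" unfolding P_def by simp
  have rng: "\<forall>(a,b)\<in>P. 0 \<le> a \<and> a < 1 \<and> 0 \<le> b \<and> b < 1" unfolding P_def by (auto simp: frac_lt_1)
  have iso: "\<forall>(a,b)\<in>P. \<forall>(a',b')\<in>P. a \<le> a' \<longleftrightarrow> b \<le> b'"
  proof -
    have f0: "\<And>x::real. frac x \<le> 0 \<longleftrightarrow> frac x = 0" using frac_ge_0 by (metis order.eq_iff)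
    show ?thesis unfolding P_def using rel zr f0 by (auto simp: frac_ge_0)
  qed
  obtain g where G: "strict_mono g" "\<forall>x. g (x + 1) = g x + 1" "g 0 = 0" "\<forall>(a,b)\<in>P. g a = b"
    using mk_g[OF finP z rng iso] by blast
  have "g (w2 c) = w c" if c: "c \<in> clocks A" "w2 c \<le> ?M" for c
  proof -
    have a: "w c \<le> ?M" using act[OF c(1)] c(2) by simp
    have "(frac (w2 c), frac (w c)) \<in> P" unfolding P_def using c a by auto
    then have gf: "g (frac (w2 c)) = frac (w c)" using G(4) by auto
    have "w2 c = frac (w2 c) + real_of_int \<lfloor>w2 c\<rfloor>" unfolding frac_def by simp
    then have "g (w2 c) = g (frac (w2 c)) + real_of_int \<lfloor>w2 c\<rfloor>" using f_int[OF G(2)] by metis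
    also have "\<dots> = frac (w c) + real_of_int \<lfloor>w c\<rfloor>" using gf fl[OF c(1) a] by simp
    finally show ?thesis unfolding frac_def by simp
  qed
  then show ?thesis using G act by blast
qed

lemma reach_sig:
  assumes wf: "wf_enta A" and r: "reach_cfg A (real_of_int m) q w2" and s: "sig A q w = sig A q w2"
  shows "\<exists>w'. reach_cfg A (real_of_int m) q w' \<and> veq A w w'"
proof -
  obtain g where G: "strict_mono g" "\<forall>x. g (x + 1) = g x + 1" "g 0 = 0"
     "\<forall>c\<in>clocks A. w2 c \<le> maxc A \<longrightarrow> g (w2 c) = w c" "\<forall>c\<in>clocks A. w2 c \<le> maxc A \<longleftrightarrow> w c \<le> maxc A"
    using sig_match[OF wf s] by blast
  have gM: "g (real (maxc A)) = real (maxc A)" using f_nat[OF G(2), of 0 "maxc A"] G(3) by simp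
  have "veq A w (\<lambda>c. g (w2 c))"
    unfolding veq_def
  proof
    fix c assume c: "c \<in> clocks A"
    show "w c = g (w2 c) \<or> (real (maxc A) < w c \<and> real (maxc A) < g (w2 c))"
    proof (cases "w2 c \<le> maxc A")
      case True then show ?thesis using G(4) c by auto
    next
      case False
      then have "g (real (maxc A)) < g (w2 c)" using G(1) by (simp add: strict_mono_less)
      then show ?thesis using False G(5) c gM by auto
    qed
  qed
  then show ?thesis using reach_g[OF G(1,2,3) r] by blast
qed


lemma run_inv:
  shows "run_from A q v \<rho> \<Longrightarrow> wf_enta A \<Longrightarrow> q \<in> locs A \<Longrightarrow> \<forall>c. v c \<ge> 0 \<Longrightarrow> fst (endst q v \<rho>) \<in> locs A \<and> (\<forall>c. snd (endst q v \<rho>) c \<ge> 0)"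
proof (induction A q v \<rho> rule: run_from.induct)
  case (1 A q v)
  then show ?case by simp
next
  case (2 A' q v d p a g R p' rest)
  have "p' \<in> locs A'" using 2 reset_bound[of A' p a g R p'] by auto
  moreover have "\<forall>c. reset (\<lambda>c. v c + d) R c \<ge> 0" using "2.prems" by (auto simp: reset_def)
  ultimately show ?case using 2 by auto
qed

lemma reach_inv:
  assumes wf: "wf_enta A" and r: "reach_cfg A t q w"
  shows "q \<in> locs A \<and> (\<forall>c. w c \<ge> 0)"
proof -
  obtain \<rho> e where R: "is_run A \<rho>" "e \<ge> 0" "dur \<rho> + e = t" "cfg_after (init A) (\<lambda>_. 0) \<rho> e = (q, w)"
    using r unfolding reach_cfg_def by blast
  have "init A \<in> locs A" using wf unfolding wf_enta_def by simp
  then have "fst (endst (init A) (\<lambda>_. 0) \<rho>) \<in> locs A \<and> (\<forall>c. snd (endst (init A) (\<lambda>_. 0) \<rho>) c \<ge> 0)"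
    using run_inv[OF _ wf] R(1) unfolding is_run_def by simp
  then show ?thesis using R(2,4) unfolding cfg_after_def by auto
qed

definition sigU :: "('q,'a,'c) enta \<Rightarrow> ('q \<times> ('c \<Rightarrow> int option) \<times> ('c \<times> 'c) set \<times> 'c set) set" where
  "sigU A = locs A \<times> {f. \<forall>x. (x \<in> clocks A \<longrightarrow> f x \<in> insert None (Some ` {0..int (maxc A)})) \<and> (x \<notin> clocks A \<longrightarrow> f x = None)}
     \<times> Pow (clocks A \<times> clocks A) \<times> Pow (clocks A)"

lemma finite_sigU: "wf_enta A \<Longrightarrow> finite (sigU A)"
  unfolding sigU_def wf_enta_def by (intro finite_cartesian_product finite_set_of_finite_funs) auto

lemma sig_in_U:
  assumes wf: "wf_enta A" and r: "reach_cfg A t q w"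
  shows "sig A q w \<in> sigU A"
proof -
  have I: "q \<in> locs A" "\<forall>c. w c \<ge> 0" using reach_inv[OF wf r] by auto
  have "\<lfloor>w c\<rfloor> \<in> {0..int (maxc A)}" if "w c \<le> maxc A" for c
    using that I(2) by (auto simp: le_floor_iff floor_le_iff)
  then show ?thesis unfolding sig_def sigU_def using I by auto
qed

lemma sig_veq:
  assumes "veq A v v'" shows "sig A q v = sig A q v'"
proof -
  have a: "\<And>c. c \<in> clocks A \<Longrightarrow> (v c \<le> maxc A \<longleftrightarrow> v' c \<le> maxc A)"
    and b: "\<And>c. c \<in> clocks A \<Longrightarrow> v c \<le> maxc A \<Longrightarrow> v c = v' c"
    using assms unfolding veq_def by force+
  have 1: "(\<lambda>c. if c \<in> clocks A \<and> v c \<le> maxc A then Some \<lfloor>v c\<rfloor> else None) = (\<lambda>c. if c \<in> clocks A \<and> v' c \<le> maxc A then Some \<lfloor>v' c\<rfloor> else None)"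
    using a b by (auto intro!: ext)
  have 2: "{(c,d). c \<in> clocks A \<and> d \<in> clocks A \<and> v c \<le> maxc A \<and> v d \<le> maxc A \<and> frac (v c) \<le> frac (v d)}
     = {(c,d). c \<in> clocks A \<and> d \<in> clocks A \<and> v' c \<le> maxc A \<and> v' d \<le> maxc A \<and> frac (v' c) \<le> frac (v' d)}"
    using a b by auto
  have 3: "{c. c \<in> clocks A \<and> v c \<le> maxc A \<and> frac (v c) = 0} = {c. c \<in> clocks A \<and> v' c \<le> maxc A \<and> frac (v' c) = 0}"
    using a b by auto
  show ?thesis unfolding sig_def using 1 2 3 by simp
qed


definition Sreach :: "('q,'a,'c) enta \<Rightarrow> nat \<Rightarrow> ('q \<times> ('c \<Rightarrow> int option) \<times> ('c \<times> 'c) set \<times> 'c set) set" where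
  "Sreach A n = {sig A q w | q w. reach_cfg A (real n) q w}"

definition Gstep :: "('q,'a,'c) enta \<Rightarrow> ('q \<times> ('c \<Rightarrow> int option) \<times> ('c \<times> 'c) set \<times> 'c set) set \<Rightarrow> ('q \<times> ('c \<Rightarrow> int option) \<times> ('c \<times> 'c) set \<times> 'c set) set" where
  "Gstep A S = {sig A q' w' | q' w'. \<exists>q w \<rho> e. sig A q w \<in> S \<and> run_from A q w \<rho> \<and> e \<ge> 0 \<and> dur \<rho> + e = 1 \<and> cfg_after q w \<rho> e = (q', w')}"

lemma Sreach_step:
  assumes wf: "wf_enta A"
  shows "Sreach A (Suc n) = Gstep A (Sreach A n)"
proof
  show "Sreach A (Suc n) \<subseteq> Gstep A (Sreach A n)"
  proof
    fix \<sigma> assume "\<sigma> \<in> Sreach A (Suc n)"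
    then obtain q' w' where s: "\<sigma> = sig A q' w'" and r: "reach_cfg A (real (Suc n)) q' w'"
      unfolding Sreach_def by blast
    obtain \<rho> e where R: "is_run A \<rho>" "e \<ge> 0" "dur \<rho> + e = real (Suc n)" "cfg_after (init A) (\<lambda>_. 0) \<rho> e = (q', w')"
      using r unfolding reach_cfg_def by blast
    have "0 \<le> real n" "real n \<le> 0 + dur \<rho> + e" using R(3) by auto
    from split_run[OF R(1)[unfolded is_run_def] R(2) this]
    obtain \<rho>1 e1 \<rho>2 e2 where S: "run_from A (init A) (\<lambda>_. 0) \<rho>1" "e1 \<ge> 0" "0 + dur \<rho>1 + e1 = real n"
      "run_from A (fst (endst (init A) (\<lambda>_. 0) \<rho>1)) (\<lambda>c. snd (endst (init A) (\<lambda>_. 0) \<rho>1) c + e1) \<rho>2" "e2 \<ge> 0"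
      "cfg_after (fst (endst (init A) (\<lambda>_. 0) \<rho>1)) (\<lambda>c. snd (endst (init A) (\<lambda>_. 0) \<rho>1) c + e1) \<rho>2 e2 = cfg_after (init A) (\<lambda>_. 0) \<rho> e"
      "real n + dur \<rho>2 + e2 = 0 + dur \<rho> + e"
      by blast
    have r1: "reach_cfg A (real n) (fst (endst (init A) (\<lambda>_. 0) \<rho>1)) (\<lambda>c. snd (endst (init A) (\<lambda>_. 0) \<rho>1) c + e1)"
      unfolding reach_cfg_def is_run_def cfg_after_def using S(1,2,3) by auto
    show "\<sigma> \<in> Gstep A (Sreach A n)"
      unfolding Gstep_def Sreach_def using s r1 S(4,5,6,7) R(3,4) by fastforce
  qed
next
  show "Gstep A (Sreach A n) \<subseteq> Sreach A (Suc n)"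
  proof
    fix \<sigma> assume "\<sigma> \<in> Gstep A (Sreach A n)"
    then obtain q' w' q w \<rho> e where s: "\<sigma> = sig A q' w'" and G: "sig A q w \<in> Sreach A n" "run_from A q w \<rho>" "e \<ge> 0"
      "dur \<rho> + e = 1" "cfg_after q w \<rho> e = (q', w')"
      unfolding Gstep_def by blast
    obtain q0 w0 where r0: "reach_cfg A (real n) q0 w0" "sig A q w = sig A q0 w0"
      using G(1) unfolding Sreach_def by blast
    have q0: "q0 = q" using r0(2) unfolding sig_def by simp
    have r0': "reach_cfg A (real_of_int (int n)) q w0" using r0(1) q0 by simp
    obtain w1 where W: "reach_cfg A (real_of_int (int n)) q w1" "veq A w w1"
      using reach_sig[OF wf r0' r0(2)[unfolded q0]] by blast
    have sim: "run_from A q w1 \<rho> \<and> fst (endst q w1 \<rho>) = fst (endst q w \<rho>) \<and> veq A (snd (endst q w \<rho>)) (snd (endst q w1 \<rho>))"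
      using sim_run[OF wf G(2) W(2)] .
    obtain \<rho>1 e1 where R1: "is_run A \<rho>1" "e1 \<ge> 0" "dur \<rho>1 + e1 = real n" "cfg_after (init A) (\<lambda>_. 0) \<rho>1 e1 = (q, w1)"
      using W(1) unfolding reach_cfg_def by auto
    have qe: "q = fst (endst (init A) (\<lambda>_. 0) \<rho>1)" and we: "w1 = (\<lambda>c. snd (endst (init A) (\<lambda>_. 0) \<rho>1) c + e1)"
      using R1(4) unfolding cfg_after_def by auto
    obtain \<rho>' e' where J: "run_from A (init A) (\<lambda>_. 0) \<rho>'" "e' \<ge> 0"
      "cfg_after (init A) (\<lambda>_. 0) \<rho>' e' = cfg_after q w1 \<rho> e" "dur \<rho>' + e' = dur \<rho>1 + e1 + dur \<rho> + e"
      using join_run[OF R1(1)[unfolded is_run_def] R1(2), of \<rho> e 0] sim qe we G(3) by auto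
    have "reach_cfg A (real (Suc n)) (fst (cfg_after q w1 \<rho> e)) (snd (cfg_after q w1 \<rho> e))"
      unfolding reach_cfg_def is_run_def using J R1(3) G(4)
      by (intro exI[of _ \<rho>'] exI[of _ e']) (auto simp: prod_eq_iff)
    moreover have "fst (cfg_after q w1 \<rho> e) = q'" using G(5) sim unfolding cfg_after_def by auto
    moreover have "veq A w' (snd (cfg_after q w1 \<rho> e))"
      using G(5) veq_add[OF conjunct2[OF conjunct2[OF sim]] G(3)] unfolding cfg_after_def by auto
    ultimately show "\<sigma> \<in> Sreach A (Suc n)"
      unfolding Sreach_def using s sig_veq by fastforce
  qed
qed




lemma periodic:
  assumes wf: "wf_enta A"
  shows "\<exists>a L. L > 0 \<and> (\<forall>n\<ge>a. \<forall>k. Sreach A (n + k * L) = Sreach A n)"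
proof -
  have "range (Sreach A) \<subseteq> Pow (sigU A)" unfolding Sreach_def using sig_in_U[OF wf] by auto
  then have fr: "finite (range (Sreach A))" using finite_sigU[OF wf] by (rule finite_subset[OF _ finite_Pow_iff[THEN iffD2]])
  have "\<not> inj (Sreach A)"
  proof
    assume "inj (Sreach A)"
    then have "finite (UNIV :: nat set)" using finite_imageD[OF fr] by blast
    then show False by simp
  qed
  then obtain x y where xy: "x \<noteq> y" "Sreach A x = Sreach A y" unfolding inj_def by blast
  obtain a b where ab: "a < b" "Sreach A a = Sreach A b"
  proof (cases "x < y")
    case True then show ?thesis using that xy by blast
  next
    case False then have "y < x" using xy by simp
    then show ?thesis using that[of y x] xy by simp
  qed
  have sh: "Sreach A (a + j) = Sreach A (b + j)" for j
  proof (induction j)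
    case (Suc j)
    have "Sreach A (a + Suc j) = Gstep A (Sreach A (a + j))" using Sreach_step[OF wf, of "a + j"] by simp
    also have "\<dots> = Gstep A (Sreach A (b + j))" using Suc by simp
    also have "\<dots> = Sreach A (b + Suc j)" using Sreach_step[OF wf, of "b + j"] by simp
    finally show ?case .
  qed (simp add: ab)
  have one: "Sreach A (n + (b - a)) = Sreach A n" if "n \<ge> a" for n
  proof -
    define j where "j = n - a"
    have e1: "n = a + j" using that unfolding j_def by simp
    have e2: "n + (b - a) = b + j" using that ab(1) unfolding j_def by simp
    have "Sreach A (n + (b - a)) = Sreach A (b + j)" by (simp only: e2)
    also have "\<dots> = Sreach A (a + j)" by (rule sh[symmetric])
    also have "\<dots> = Sreach A n" by (simp only: e1[symmetric])
    finally show ?thesis .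
  qed
  have "\<forall>n\<ge>a. \<forall>k. Sreach A (n + k * (b - a)) = Sreach A n"
  proof (intro allI impI)
    fix n k :: nat assume n: "n \<ge> a"
    show "Sreach A (n + k * (b - a)) = Sreach A n"
    proof (induction k)
      case (Suc k)
      have "n + Suc k * (b - a) = (n + k * (b - a)) + (b - a)" by simp
      then have "Sreach A (n + Suc k * (b - a)) = Sreach A ((n + k * (b - a)) + (b - a))" by (simp only:)
      also have "\<dots> = Sreach A (n + k * (b - a))" by (rule one) (use n in simp)
      finally show ?case using Suc by simp
    qed simp
  qed
  then show ?thesis using ab(1) by (intro exI[of _ a] exI[of _ "b - a"]) auto
qed


lemma Seq:
  assumes P: "\<forall>n\<ge>a. \<forall>k. Sreach A (n + k * L0) = Sreach A n"
    and n: "n \<ge> a" and n': "n' \<ge> a" and k: "int n' = int n + k * int L0"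
  shows "Sreach A n = Sreach A n'"
proof (cases "k \<ge> 0")
  case True
  then have "n' = n + nat k * L0" using k by (metis nat_int nat_mult_distrib of_nat_add of_nat_mult int_nat_eq nat_0_le)
  then show ?thesis using P n by simp
next
  case False
  then have "int n = int n' + int (nat (- k) * L0)" using k by simp
  then have "int n = int (n' + nat (- k) * L0)" by simp
  then have "n = n' + nat (- k) * L0" by (simp only: of_nat_eq_iff)
  then show ?thesis using P n' by simp
qed

theorem theorem2:
  fixes A :: "('q,'a,'c) enta"
  assumes "wf_enta A"
  shows "\<exists>t_per::real. t_per > 0 \<and> (\<exists>L::int. L > 0 \<and>
    (\<forall>pre suf K. pre @ suf \<in> lang A \<longrightarrow> suf \<noteq> [] \<longrightarrow> fst (hd suf) > t_per \<longrightarrow>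
       (\<exists>k::int. K = real_of_int (k * L)) \<longrightarrow> fst (hd suf) + K > t_per \<longrightarrow>
       (\<exists>pre'. pre' @ map (\<lambda>(t, a). (t + K, a)) suf \<in> lang A)))"
proof -
  note wf = assms
  obtain a L0 where P: "L0 > 0" "\<forall>n\<ge>a. \<forall>k. Sreach A (n + k * L0) = Sreach A n"
    using periodic[OF wf] by blast
  have main: "\<exists>pre'. pre' @ map (\<lambda>(t, a). (t + K, a)) suf \<in> lang A"
    if H: "pre @ suf \<in> lang A" "suf \<noteq> []" "fst (hd suf) > real a + 1" "K = real_of_int (k * int L0)"
      "fst (hd suf) + K > real a + 1" for pre suf K k
  proof -
    obtain \<rho> where R: "is_run A \<rho>" "pre @ suf = observable (timed_trace 0 \<rho>)"
      using H(1) unfolding lang_def by blast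
    define tr where "tr = fst (hd suf)"
    define n :: int where "n = \<lceil>tr\<rceil> - 1"
    have n1: "real_of_int n < tr" "tr \<le> real_of_int n + 1" unfolding n_def by linarith+
    have na: "n \<ge> int a" using n1 H(3) unfolding tr_def by linarith
    define n' :: int where "n' = n + k * int L0"
    have n'K: "real_of_int n' = real_of_int n + K" unfolding n'_def H(4) by simp
    have n'a: "n' \<ge> int a" using n1 H(5) n'K unfolding tr_def by linarith
    define e0 where "e0 = max 0 (real_of_int n - dur \<rho>)"
    have "e0 \<ge> 0" "0 \<le> real_of_int n" "real_of_int n \<le> 0 + dur \<rho> + e0" using na unfolding e0_def by auto
    from split_run[OF R(1)[unfolded is_run_def] this]
    obtain \<rho>1 e1 \<rho>2 e2 where S: "run_from A (init A) (\<lambda>_. 0) \<rho>1" "e1 \<ge> 0" "0 + dur \<rho>1 + e1 = real_of_int n"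
      "\<forall>x\<in>set (timed_trace 0 \<rho>1). fst x \<le> real_of_int n"
      "run_from A (fst (endst (init A) (\<lambda>_. 0) \<rho>1)) (\<lambda>c. snd (endst (init A) (\<lambda>_. 0) \<rho>1) c + e1) \<rho>2"
      "timed_trace 0 \<rho> = timed_trace 0 \<rho>1 @ timed_trace (real_of_int n) \<rho>2"
      by blast
    define q1 where "q1 = fst (endst (init A) (\<lambda>_. 0) \<rho>1)"
    define w1 where "w1 = (\<lambda>c. snd (endst (init A) (\<lambda>_. 0) \<rho>1) c + e1)"
    define X where "X = observable (timed_trace 0 \<rho>1)"
    define Y where "Y = observable (timed_trace (real_of_int n) \<rho>2)"
    have XY: "pre @ suf = X @ Y" using R(2) S(6) unfolding X_def Y_def by (simp add: obs_append)
    have Xt: "\<forall>x\<in>set X. fst x \<le> real_of_int n" using S(4) obs_times unfolding X_def by fastforce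
    obtain Y1 where Y1: "Y = Y1 @ suf"
    proof -
      obtain us where "(pre = X @ us \<and> us @ suf = Y) \<or> (pre @ us = X \<and> suf = us @ Y)"
        using XY append_eq_append_conv2 by blast
      then show ?thesis
      proof
        assume "pre = X @ us \<and> us @ suf = Y" then show ?thesis using that by blast
      next
        assume u: "pre @ us = X \<and> suf = us @ Y"
        show ?thesis
        proof (cases us)
          case Nil then show ?thesis using u that[of "[]"] by simp
        next
          case (Cons u0 us')
          then have "hd suf \<in> set X" using u by auto
          then have "tr \<le> real_of_int n" using Xt unfolding tr_def by blast
          then show ?thesis using n1 by simp
        qed
      qed
    qed
    have r1: "reach_cfg A (real_of_int n) q1 w1"
      unfolding reach_cfg_def is_run_def cfg_after_def q1_def w1_def using S(1,2,3) by auto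
    have "sig A q1 w1 \<in> Sreach A (nat n)" unfolding Sreach_def using r1 na by auto
    also have "Sreach A (nat n) = Sreach A (nat n')"
      using Seq[OF P(2), of "nat n" "nat n'" k] na n'a unfolding n'_def by simp
    finally obtain q0 w0 where r0: "reach_cfg A (real (nat n')) q0 w0" "sig A q1 w1 = sig A q0 w0"
      unfolding Sreach_def by blast
    have q0: "q0 = q1" using r0(2) unfolding sig_def by simp
    have r0': "reach_cfg A (real_of_int n') q1 w0" using r0(1) q0 n'a by simp
    obtain w2 where W: "reach_cfg A (real_of_int n') q1 w2" "veq A w1 w2"
      using reach_sig[OF wf r0' r0(2)[unfolded q0]] by blast
    have run2: "run_from A q1 w2 \<rho>2" using sim_run[OF wf S(5)[folded q1_def w1_def] W(2)] by blast
    obtain \<rho>1' e1' where R1: "is_run A \<rho>1'" "e1' \<ge> 0" "dur \<rho>1' + e1' = real_of_int n'"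
      "cfg_after (init A) (\<lambda>_. 0) \<rho>1' e1' = (q1, w2)"
      using W(1) unfolding reach_cfg_def by auto
    have qe: "q1 = fst (endst (init A) (\<lambda>_. 0) \<rho>1')" and we: "w2 = (\<lambda>c. snd (endst (init A) (\<lambda>_. 0) \<rho>1') c + e1')"
      using R1(4) unfolding cfg_after_def by auto
    obtain \<rho>' where J: "run_from A (init A) (\<lambda>_. 0) \<rho>'"
      "timed_trace 0 \<rho>' = timed_trace 0 \<rho>1' @ timed_trace (0 + dur \<rho>1' + e1') \<rho>2"
      using join_run[OF R1(1)[unfolded is_run_def] R1(2), of \<rho>2 0 0] run2 qe we by auto
    have "timed_trace (0 + dur \<rho>1' + e1') \<rho>2 = map (\<lambda>(t, a). (t + K, a)) (timed_trace (real_of_int n) \<rho>2)"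
      using R1(3) n'K tt_shift[of "real_of_int n" K \<rho>2] by simp
    then have eq: "(observable (timed_trace 0 \<rho>1') @ map (\<lambda>(t, a). (t + K, a)) Y1) @ map (\<lambda>(t, a). (t + K, a)) suf = observable (timed_trace 0 \<rho>')"
      using J(2) Y1 unfolding Y_def by (simp add: obs_append obs_shift)
    have "observable (timed_trace 0 \<rho>') \<in> lang A" unfolding lang_def is_run_def using J(1) by blast
    then show ?thesis unfolding eq[symmetric] by blast
  qed
  show ?thesis
    apply (rule exI[of _ "real a + 1"])
    apply (intro conjI)
     apply simp
    apply (rule exI[of _ "int L0"])
    using P(1) main by auto
qed


end
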